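(* For all $n,m,l\in\mathbb{N}_0$ with $l\le n$ and $l\le m$, and all $x,y\in[0,1]$, $$\frac{1}{\bigl([x]_q+[1-x]_q\bigr)^{n-l}\bigl([y]_q+[1-y]_q\bigr)^{m-l}}\sum_{k=l}^{n}\sum_{j=l}^{m}\frac{\binom{k}{l}\binom{j}{l}}{\binom{n}{l}\binom{m}{l}}B_{k,j;n,m}(x,y;q)$$ $$=\sum_{k=0}^{l}\sum_{j=0}^{l}q^{\binom{k}{2}+\binom{j}{2}}\binom{x}{k}_q\binom{y}{j}_q[k]_q!\,[j]_q!\,S(l,k;q)\,S(l,j;q).$$
   Context: Fix $q\in(0,1)$. For real $x$ put $[x]_q=\frac{1-q^x}{1-q}$. For $k,j,n,m\in\mathbb{Z}$ and $x,y\in[0,1]$, the modified $q$-Bernstein polynomial of two variables is $B_{k,j;n,m}(x,y;q)=\binom{n}{k}\binom{m}{j}[x]_q^k[y]_q^j[1-x]_q^{n-k}[1-y]_q^{m-j}$ if $0\le k\le n$ and $0\le j\le m$, and $B_{k,j;n,m}(x,y;q)=0$ otherwise. For $k\in\mathbb{N}_0$, $[k]_q!=[1]_q[2]_q\cdots[k]_q$ with $[0]_q!=1$. For real $x$ and $k\in\mathbb{N}_0$, $\binom{x}{k}_q=\frac{[x]_q[x-1]_q\cdots[x-k+1]_q}{[k]_q!}$ (equal to $1$ for $k=0$); for integers $0\le i\le k$, $\binom{k}{i}_q=\frac{[k]_q!}{[i]_q![k-i]_q!}$. The $q$-Stirling numbers of the second kind are $S(n,k;q)=\frac{q^{-\binom{k}{2}}}{[k]_q!}\sum_{i=0}^{k}(-1)^i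 q^{\binom{i}{2}}\binom{k}{i}_q[k-i]_q^{\,n}$ for $n,k\in\mathbb{N}_0$, with the convention $0^0=1$. *)

theory Defs
  imports Complex_Main
begin

definition qnum :: "real \<Rightarrow> real \<Rightarrow> real" where
  "qnum q x = (1 - q powr x) / (1 - q)"

definition qfact :: "real \<Rightarrow> nat \<Rightarrow> real" where
  "qfact q k = (\<Prod>i\<in>{1..k}. qnum q (real i))"

definition qbinom_real :: "real \<Rightarrow> real \<Rightarrow> nat \<Rightarrow> real" where
  "qbinom_real q x k = (\<Prod>i\<in>{0..<k}. qnum q (x - real i)) / qfact q k"

definition qbinom :: "real \<Rightarrow> nat \<Rightarrow> nat \<Rightarrow> real" where
  "qbinom q k i = qfact q k / (qfact q i * qfact q (k - i))"

text \<open>q-Stirling numbers of the second kind (0^0 = 1, as for Isabelle's power).\<close>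
definition qstirling :: "real \<Rightarrow> nat \<Rightarrow> nat \<Rightarrow> real" where
  "qstirling q n k = inverse (q ^ (k choose 2)) / qfact q k *
     (\<Sum>i=0..k. (-1) ^ i * q ^ (i choose 2) * qbinom q k i * (qnum q (real (k - i))) ^ n)"

definition qbernstein2 :: "real \<Rightarrow> int \<Rightarrow> int \<Rightarrow> int \<Rightarrow> int \<Rightarrow> real \<Rightarrow> real \<Rightarrow> real" where
  "qbernstein2 q k j n m x y =
     (if 0 \<le> k \<and> k \<le> n \<and> 0 \<le> j \<and> j \<le> m then
        real (nat n choose nat k) * real (nat m choose nat j)
        * qnum q x ^ nat k * qnum q y ^ nat j
        * qnum q (1 - x) ^ nat (n - k) * qnum q (1 - y) ^ nat (m - j)
      else 0)"

end

theory Submission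
  imports Defs
begin

lemma qnum_nat: "0 < q \<Longrightarrow> qnum q (real k) = (1 - q^k)/(1-q)"
  by (simp add: qnum_def powr_realpow)

lemma qnum_zero: "0 < q \<Longrightarrow> qnum q 0 = 0"
  by (simp add: qnum_def)

lemma qnum_shift:
  assumes "0<q" "q<1"
  shows "qnum q x = qnum q (real k) + q^k * qnum q (x - real k)"
proof -
  have "q powr x = q powr (real k) * q powr (x - real k)" by (simp add: powr_add[symmetric])
  also have "\<dots> = q^k * q powr (x - real k)" using assms by (simp add: powr_realpow)
  finally have e: "q powr x = q^k * q powr (x - real k)" .
  show ?thesis using assms unfolding qnum_def e by (simp add: powr_realpow field_simps)
qed

lemma qnum_add:
  assumes "0<q" "q<1"
  shows "qnum q (real (a+b)) = qnum q (real a) + q^a * qnum q (real b)"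
  using qnum_shift[OF assms, of "real (a+b)" a] by simp

lemma qnum_pos: assumes "0<q" "q<1" "0 < k" shows "qnum q (real k) > 0"
proof -
  have "q^k < 1" using assms by (simp add: power_less_one_iff)
  then show ?thesis using assms by (simp add: qnum_nat)
qed

lemma qfact_Suc: "qfact q (Suc k) = qfact q k * qnum q (real (Suc k))"
  by (simp add: qfact_def)

lemma qfact_pos: assumes "0<q" "q<1" shows "qfact q k > 0"
  unfolding qfact_def using qnum_pos[OF assms] by (intro prod_pos) auto

lemma qfact_0: "qfact q 0 = 1" by (simp add: qfact_def)

lemma qbinom_0: "0<q \<Longrightarrow> q<1 \<Longrightarrow> qbinom q k 0 = 1"
  using qfact_pos[of q k] by (simp add: qbinom_def qfact_0)

lemma qbinom_diag: "0<q \<Longrightarrow> q<1 \<Longrightarrow> qbinom q k k = 1"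
  using qfact_pos[of q k] by (simp add: qbinom_def qfact_0)

lemma qbinom_pascal:
  assumes "0<q" "q<1" "j < k"
  shows "qbinom q (Suc k) (Suc j) = qbinom q k j + q^(Suc j) * qbinom q k (Suc j)"
proof -
  define d where "d = k - Suc j"
  have kj: "k - j = Suc d" using assms unfolding d_def by simp
  have sk: "Suc k = Suc j + Suc d" using assms unfolding d_def by simp
  have QQ: "qnum q (real (Suc k)) = qnum q (real (Suc j)) + q^(Suc j) * qnum q (real (Suc d))"
    using qnum_add[OF assms(1,2), of "Suc j" "Suc d"] sk by simp
  have p1: "qfact q j > 0" "qfact q d > 0" "qfact q k > 0" using qfact_pos[OF assms(1,2)] by auto
  have p2: "qnum q (real (Suc j)) > 0" "qnum q (real (Suc d)) > 0" by (rule qnum_pos[OF assms(1,2)], simp)+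
  show ?thesis unfolding qbinom_def
    using p1 p2 kj assms(3) unfolding qfact_Suc d_def[symmetric] 
    apply (simp add: qfact_Suc QQ d_def[symmetric])
    apply (simp add: field_simps)
    using QQ by (simp add: algebra_simps)
qed

lemma choose2_Suc: "Suc j choose 2 = (j choose 2) + j"
  by (simp add: numeral_2_eq_2)

lemma choose2_0: "(0::nat) choose 2 = 0" by (simp add: numeral_2_eq_2)

lemma qbinom_Suc_mult:
  assumes "0<q" "q<1" "j \<le> k"
  shows "qbinom q (Suc k) (Suc j) * qnum q (real (Suc j)) = qnum q (real (Suc k)) * qbinom q k j"
proof -
  have p1: "qfact q j > 0" "qfact q (k-j) > 0" "qfact q k > 0" using qfact_pos[OF assms(1,2)] by auto
  have p2: "qnum q (real (Suc j)) > 0" by (rule qnum_pos[OF assms(1,2)], simp)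
  show ?thesis unfolding qbinom_def qfact_Suc using p1 p2 assms(3) by (simp add: field_simps)
qed

definition Aq :: "real \<Rightarrow> nat \<Rightarrow> nat \<Rightarrow> real" where
  "Aq q n k = (\<Sum>i=0..k. (-1)^i * q^(i choose 2) * qbinom q k i * qnum q (real (k-i)) ^ n)"

lemma qstirling_Aq: "qstirling q n k = Aq q n k / (q^(k choose 2) * qfact q k)"
  by (simp add: qstirling_def Aq_def divide_inverse ac_simps)

lemma Aq_rec:
  assumes "0<q" "q<1"
  shows "Aq q (Suc n) (Suc k) = qnum q (real (Suc k)) * Aq q n (Suc k)
           + q^k * qnum q (real (Suc k)) * Aq q n k"
proof -
  define Q where "Q i = qnum q (real i)" for i
  define t where "t i = (-1)^i * q^(i choose 2) * qbinom q (Suc k) i" for i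
  have "Aq q (Suc n) (Suc k) - Q (Suc k) * Aq q n (Suc k)
      = (\<Sum>i=0..Suc k. t i * Q (Suc k - i)^n * (Q (Suc k - i) - Q (Suc k)))"
    unfolding Aq_def t_def Q_def
    by (simp add: sum_distrib_left sum_subtractf[symmetric] algebra_simps del: sum.cl_ivl_Suc)
  also have "\<dots> = (\<Sum>i=0..Suc k. - (t i * q^(Suc k - i) * Q i * Q (Suc k - i)^n))"
  proof (rule sum.cong)
    fix i assume "i \<in> {0..Suc k}"
    then have "Q (Suc k) = Q (Suc k - i) + q^(Suc k - i) * Q i"
      using qnum_add[OF assms, of "Suc k - i" i] unfolding Q_def by simp
    then show "t i * Q (Suc k - i)^n * (Q (Suc k - i) - Q (Suc k))
        = - (t i * q^(Suc k - i) * Q i * Q (Suc k - i)^n)" by (simp add: algebra_simps)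
  qed simp
  also have "\<dots> = (\<Sum>j=0..k. - (t (Suc j) * q^(k - j) * Q (Suc j) * Q (k - j)^n))"
    by (subst sum.atLeast0_atMost_Suc_shift) (simp add: Q_def qnum_zero[OF assms(1)] del: sum.cl_ivl_Suc)
  also have "\<dots> = (\<Sum>j=0..k. q^k * Q (Suc k) * ((-1)^j * q^(j choose 2) * qbinom q k j * Q (k-j)^n))"
  proof (rule sum.cong)
    fix j assume "j \<in> {0..k}"
    then have jk: "j \<le> k" by simp
    have b: "qbinom q (Suc k) (Suc j) * Q (Suc j) = Q (Suc k) * qbinom q k j"
      using qbinom_Suc_mult[OF assms jk] unfolding Q_def .
    have pw: "q^((j choose 2) + j) * q^(k-j) = q^(j choose 2) * q^k"
    proof -
      have e: "(j choose 2) + j + (k-j) = (j choose 2) + k" using jk by (simp del: binomial_Suc_Suc)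
      have "q^((j choose 2) + j) * q^(k-j) = q^((j choose 2) + j + (k-j))" by (rule power_add[symmetric])
      also have "\<dots> = q^(j choose 2) * q^k" unfolding e by (rule power_add)
      finally show ?thesis .
    qed
    have "- (t (Suc j) * q^(k - j) * Q (Suc j) * Q (k - j)^n)
        = (-1)^j * (q^((j choose 2) + j) * q^(k-j)) * (qbinom q (Suc k) (Suc j) * Q (Suc j)) * Q (k-j)^n"
      unfolding t_def choose2_Suc by (simp add: algebra_simps)
    also have "\<dots> = q^k * Q (Suc k) * ((-1)^j * q^(j choose 2) * qbinom q k j * Q (k-j)^n)"
      unfolding pw b by (simp add: algebra_simps)
    finally show "- (t (Suc j) * q^(k - j) * Q (Suc j) * Q (k - j)^n)
        = q^k * Q (Suc k) * ((-1)^j * q^(j choose 2) * qbinom q k j * Q (k-j)^n)" .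
  qed simp
  also have "\<dots> = q^k * Q (Suc k) * Aq q n k"
    unfolding Aq_def Q_def by (simp add: sum_distrib_left)
  finally show ?thesis unfolding Q_def by (simp add: algebra_simps)
qed

lemma Aq_0_Suc:
  assumes "0<q" "q<1"
  shows "Aq q 0 (Suc k) = 0"
proof -
  define c where "c j = (-1)^j * q^(Suc j choose 2) * qbinom q k j" for j
  define f where "f j = (-1)^(Suc j) * q^(Suc j choose 2) * qbinom q (Suc k) (Suc j)" for j
  have A: "Aq q 0 (Suc k) = 1 + (\<Sum>j=0..k. f j)"
    unfolding Aq_def f_def
    by (subst sum.atLeast0_atMost_Suc_shift) (simp add: qbinom_0[OF assms] choose2_0 del: sum.cl_ivl_Suc)
  have fl: "f j = c (Suc j) - c j" if "j < k" for j
  proof -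
    have e: "Suc (Suc j) choose 2 = (Suc j choose 2) + Suc j" by (rule choose2_Suc)
    show ?thesis unfolding f_def c_def qbinom_pascal[OF assms that] e power_add
      by (simp add: algebra_simps)
  qed
  have fk: "f k = - c k" unfolding f_def c_def by (simp add: qbinom_diag[OF assms])
  have "(\<Sum>j=0..k. f j) = (\<Sum>j<k. f j) + f k"
    by (simp add: atLeast0AtMost lessThan_Suc_atMost[symmetric])
  also have "(\<Sum>j<k. f j) = (\<Sum>j<k. c (Suc j) - c j)" using fl by simp
  also have "\<dots> = c k - c 0" by (rule sum_lessThan_telescope)
  finally have "(\<Sum>j=0..k. f j) = - c 0" using fk by simp
  then show ?thesis using A by (simp add: c_def qbinom_0[OF assms] choose2_Suc choose2_0)
qed

lemma Aq_Suc_0: "0<q \<Longrightarrow> Aq q (Suc n) 0 = 0"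
  by (simp add: Aq_def qnum_zero)

lemma Aq_0_0: "0<q \<Longrightarrow> q<1 \<Longrightarrow> Aq q 0 0 = 1"
  by (simp add: Aq_def qbinom_0 choose2_0)

lemma field_aux:
  fixes A B f Q c p :: real
  assumes "f > 0" "Q>0" "c>0" "p>0"
  shows "(Q * A + p * Q * B) / (c * p * (f * Q)) = B / (c * f) + Q * (A / (c * p * (f * Q)))"
  using assms by (simp add: field_simps)

lemma qst_rec:
  assumes "0<q" "q<1"
  shows "qstirling q (Suc n) (Suc k) = qstirling q n k + qnum q (real (Suc k)) * qstirling q n (Suc k)"
proof -
  have p1: "qfact q k > 0" using qfact_pos[OF assms] by auto
  have p2: "qnum q (real (Suc k)) > 0" by (rule qnum_pos[OF assms], simp)
  have p3: "q^(k choose 2) > 0" "q^k > 0" using assms by auto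
  have e: "q^(Suc k choose 2) = q^(k choose 2) * q^k" unfolding choose2_Suc power_add ..
  show ?thesis unfolding qstirling_Aq Aq_rec[OF assms] qfact_Suc e
    by (rule field_aux[OF p1 p2 p3])
qed

lemma qst_vanish:
  assumes "0<q" "q<1"
  shows "n < k \<Longrightarrow> qstirling q n k = 0"
proof (induction n arbitrary: k)
  case 0
  then obtain k' where "k = Suc k'" by (cases k) auto
  then show ?case by (simp add: qstirling_Aq Aq_0_Suc[OF assms])
next
  case (Suc n)
  then obtain k' where k: "k = Suc k'" by (cases k) auto
  then show ?case using Suc by (simp add: qst_rec[OF assms])
qed

lemma qst_0_0: "0<q \<Longrightarrow> q<1 \<Longrightarrow> qstirling q 0 0 = 1"
  by (simp add: qstirling_Aq Aq_0_0 qfact_0 choose2_0)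

lemma qst_Suc_0: "0<q \<Longrightarrow> qstirling q (Suc n) 0 = 0"
  by (simp add: qstirling_Aq Aq_Suc_0)

definition Pq :: "real \<Rightarrow> real \<Rightarrow> nat \<Rightarrow> real" where
  "Pq q x k = q^(k choose 2) * qbinom_real q x k * qfact q k"

lemma Pq_prod: "0<q \<Longrightarrow> q<1 \<Longrightarrow> Pq q x k = q^(k choose 2) * (\<Prod>i\<in>{0..<k}. qnum q (x - real i))"
  using qfact_pos[of q k] by (simp add: Pq_def qbinom_real_def)

lemma Pq_Suc:
  assumes "0<q" "q<1"
  shows "qnum q x * Pq q x k = qnum q (real k) * Pq q x k + Pq q x (Suc k)"
proof -
  define F where "F = (\<Prod>i\<in>{0..<k}. qnum q (x - real i))"
  have "Pq q x (Suc k) = q^(k choose 2) * q^k * F * qnum q (x - real k)"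
    unfolding Pq_prod[OF assms] F_def choose2_Suc power_add by simp
  moreover have "Pq q x k = q^(k choose 2) * F" unfolding Pq_prod[OF assms] F_def ..
  ultimately show ?thesis using qnum_shift[OF assms, of x k] by (simp add: algebra_simps)
qed

lemma main_ident:
  assumes "0<q" "q<1"
  shows "qnum q x ^ n = (\<Sum>k=0..n. Pq q x k * qstirling q n k)"
proof (induction n)
  case 0
  then show ?case using qst_0_0[OF assms] by (simp add: Pq_def qbinom_real_def qfact_0 choose2_0)
next
  case (Suc n)
  define S where "S = qstirling q n"
  define Q where "Q k = qnum q (real k)" for k
  define P where "P = Pq q x"
  define g where "g k = Q k * P k * S k" for k
  have "qnum q x ^ Suc n = qnum q x * (\<Sum>k=0..n. P k * S k)" using Suc by (simp add: P_def S_def)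
  also have "\<dots> = (\<Sum>k=0..n. (qnum q x * P k) * S k)" by (simp add: sum_distrib_left mult.assoc)
  also have "\<dots> = (\<Sum>k=0..n. (Q k * P k + P (Suc k)) * S k)" unfolding P_def Q_def Pq_Suc[OF assms] ..
  also have "\<dots> = (\<Sum>k=0..n. g k) + (\<Sum>k=0..n. P (Suc k) * S k)"
    by (simp add: g_def sum.distrib algebra_simps del: sum.cl_ivl_Suc)
  also have "(\<Sum>k=0..n. g k) = (\<Sum>k=0..n. g (Suc k))"
  proof -
    have "(\<Sum>k=0..Suc n. g k) = g 0 + (\<Sum>k=0..n. g (Suc k))"
      by (subst sum.atLeast0_atMost_Suc_shift) simp
    moreover have "g 0 = 0" by (simp add: g_def Q_def qnum_zero[OF assms(1)])
    moreover have "g (Suc n) = 0" by (simp add: g_def S_def qst_vanish[OF assms])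
    ultimately show ?thesis by simp
  qed
  also have "(\<Sum>k=0..n. g (Suc k)) + (\<Sum>k=0..n. P (Suc k) * S k)
      = (\<Sum>k=0..n. P (Suc k) * qstirling q (Suc n) (Suc k))"
    by (simp add: g_def S_def Q_def qst_rec[OF assms] sum.distrib[symmetric] algebra_simps del: sum.cl_ivl_Suc)
  also have "\<dots> = (\<Sum>k=0..Suc n. P k * qstirling q (Suc n) k)"
    by (simp only: sum.atLeast0_atMost_Suc_shift) (simp add: qst_Suc_0[OF assms(1)] del: sum.cl_ivl_Suc)
  finally show ?case unfolding P_def .
qed

lemma bern_sum:
  fixes a b :: real
  assumes "l \<le> n"
  shows "(\<Sum>k=l..n. real (k choose l) / real (n choose l) * (real (n choose k) * a^k * b^(n-k)))
         = a^l * (a+b)^(n-l)"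
proof -
  have pos: "real (n choose l) > 0" using assms by simp
  have "(\<Sum>k=l..n. real (k choose l) / real (n choose l) * (real (n choose k) * a^k * b^(n-k)))
      = (\<Sum>k=l..n. real ((n-l) choose (k-l)) * a^k * b^(n-k))"
  proof (rule sum.cong)
    fix k assume "k \<in> {l..n}"
    then have "(n choose k) * (k choose l) = (n choose l) * ((n - l) choose (k - l))"
      by (intro choose_mult) auto
    then have "real (n choose k) * real (k choose l) = real (n choose l) * real ((n - l) choose (k - l))"
      by (metis of_nat_mult)
    then show "real (k choose l) / real (n choose l) * (real (n choose k) * a^k * b^(n-k))
        = real ((n-l) choose (k-l)) * a^k * b^(n-k)" using pos
      by (simp add: field_simps)
  qed simp
  also have "\<dots> = (\<Sum>i=0..n-l. real ((n-l) choose i) * a^(i+l) * b^(n-l-i))"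
  proof -
    have "{l..n} = {0+l..(n-l)+l}" using assms by simp
    then show ?thesis by (simp only: sum.shift_bounds_cl_nat_ivl) (simp add: diff_diff_left add.commute)
  qed
  also have "\<dots> = a^l * (\<Sum>i=0..n-l. real ((n-l) choose i) * a^i * b^(n-l-i))"
    by (simp add: sum_distrib_left power_add algebra_simps)
  also have "\<dots> = a^l * (a+b)^(n-l)"
    by (simp add: binomial_ring atLeast0AtMost)
  finally show ?thesis .
qed

lemma qnum_nonneg: "0<q \<Longrightarrow> q<1 \<Longrightarrow> 0 \<le> x \<Longrightarrow> 0 \<le> qnum q x"
  unfolding qnum_def using powr_le1[of x q] by simp

lemma qnum_sum_pos:
  assumes "0<q" "q<1" "0 \<le> x" "x \<le> 1"
  shows "0 < qnum q x + qnum q (1 - x)"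
proof (cases "x = 0")
  case True then show ?thesis using assms by (simp add: qnum_def qnum_zero)
next
  case False
  then have "q powr x < 1 powr x" using assms by (intro powr_less_mono2) auto
  then have "0 < qnum q x" using assms by (simp add: qnum_def)
  moreover have "0 \<le> qnum q (1-x)" using assms by (intro qnum_nonneg) auto
  ultimately show ?thesis by simp
qed

theorem theorem11:
  fixes q x y :: real and n m l :: nat
  assumes "0 < q" "q < 1"
    and "l \<le> n" "l \<le> m"
    and "0 \<le> x" "x \<le> 1" "0 \<le> y" "y \<le> 1"
  shows "1 / ((qnum q x + qnum q (1 - x)) ^ (n - l) * (qnum q y + qnum q (1 - y)) ^ (m - l))
           * (\<Sum>k=l..n. \<Sum>j=l..m.
                real (k choose l) * real (j choose l) / (real (n choose l) * real (m choose l))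
                * qbernstein2 q (int k) (int j) (int n) (int m) x y)
         = (\<Sum>k=0..l. \<Sum>j=0..l.
              q ^ ((k choose 2) + (j choose 2)) * qbinom_real q x k * qbinom_real q y j
              * qfact q k * qfact q j * qstirling q l k * qstirling q l j)"
proof -
  define a where "a = qnum q x"
  define b where "b = qnum q (1 - x)"
  define c where "c = qnum q y"
  define d where "d = qnum q (1 - y)"
  have ab: "a + b > 0" unfolding a_def b_def using qnum_sum_pos assms by auto
  have cd: "c + d > 0" unfolding c_def d_def using qnum_sum_pos assms by auto
  have L: "(\<Sum>k=l..n. \<Sum>j=l..m.
                real (k choose l) * real (j choose l) / (real (n choose l) * real (m choose l))
                * qbernstein2 q (int k) (int j) (int n) (int m) x y)
     = (\<Sum>k=l..n. real (k choose l) / real (n choose l) * (real (n choose k) * a^k * b^(n-k)))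
       * (\<Sum>j=l..m. real (j choose l) / real (m choose l) * (real (m choose j) * c^j * d^(m-j)))"
    unfolding sum_product
  proof (intro sum.cong refl)
    fix k j assume "k \<in> {l..n}" "j \<in> {l..m}"
    then have kj: "k \<le> n" "j \<le> m" by auto
    have "nat (int n - int k) = n - k" "nat (int m - int j) = m - j" using kj by auto
    then show "real (k choose l) * real (j choose l) / (real (n choose l) * real (m choose l))
                * qbernstein2 q (int k) (int j) (int n) (int m) x y
        = real (k choose l) / real (n choose l) * (real (n choose k) * a^k * b^(n-k))
          * (real (j choose l) / real (m choose l) * (real (m choose j) * c^j * d^(m-j)))"
      unfolding qbernstein2_def a_def b_def c_def d_def using kj by simp
  qed
  have R: "(\<Sum>k=0..l. \<Sum>j=0..l.
              q ^ ((k choose 2) + (j choose 2)) * qbinom_real q x k * qbinom_real q y j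
              * qfact q k * qfact q j * qstirling q l k * qstirling q l j)
     = (\<Sum>k=0..l. Pq q x k * qstirling q l k) * (\<Sum>j=0..l. Pq q y j * qstirling q l j)"
    unfolding sum_product Pq_def by (intro sum.cong refl) (simp add: power_add algebra_simps)
  show ?thesis
    unfolding L R main_ident[OF assms(1,2), symmetric] bern_sum[OF assms(3)] bern_sum[OF assms(4)]
    using ab cd unfolding a_def b_def c_def d_def by (simp add: field_simps)
qed

end
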